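(* Fix $N\ge 2$. For each integer $E$ with $1\le E\le N(N-1)$, let $m(E)$ be the minimum of the graph entropy $\mathrm{H}_{\mathcal G}[\mathbf Z]$ over all directed graphs without self-loops on $N$ nodes with exactly $E$ edges. Then $m$ is nondecreasing: if $1\le E_1\le E_2\le N(N-1)$ then $m(E_1)\le m(E_2)$. That is, given the number of nodes, a graph with fewer edges has a smaller (or equal) lower bound of graph entropy.
   Context: A directed graph on $N\ge 2$ nodes without self-loops is encoded by a zero-diagonal binary matrix $\mathbf Z=(z_{ij})\in\{0,1\}^{N\times N}$, with $z_{ij}=1$ meaning a directed edge $(i,j)$. The in-degree of node $j$ is $d_j=\sum_{i=1}^N z_{ij}$, and the number of edges is $|\mathcal E|=\sum_{i\ne j} z_{ij}$. For $|\mathcal E|\ge 1$, the graph entropy is $$\mathrm{H}_{\mathcal G}[\mathbf Z]=-\frac{1}{\ln N}\sum_{j=1}^N \frac{d_j}{|\mathcal E|}\ln\frac{d_j}{|\mathcal E|},$$ with the convention $0\ln 0=0$. *)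

theory Defs
  imports Complex_Main
begin

text \<open>A directed graph without self-loops on nodes 0..N-1 is represented by its edge set
  Z, a set of pairs (i,j) with i \<noteq> j (z_ij = 1 iff (i,j) \<in> Z).\<close>

definition offdiag :: "nat \<Rightarrow> (nat \<times> nat) set" where
  "offdiag N = {(i, j). i < N \<and> j < N \<and> i \<noteq> j}"

definition digraphs :: "nat \<Rightarrow> nat \<Rightarrow> (nat \<times> nat) set set" where
  "digraphs N E = {Z. Z \<subseteq> offdiag N \<and> card Z = E}"

definition in_degree :: "(nat \<times> nat) set \<Rightarrow> nat \<Rightarrow> nat" where
  "in_degree Z j = card {i. (i, j) \<in> Z}"

text \<open>Graph entropy; note that 0 * ln 0 = 0 in Isabelle since ln 0 = 0.\<close>
definition graph_entropy :: "nat \<Rightarrow> (nat \<times> nat) set \<Rightarrow> real" where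
  "graph_entropy N Z = - (1 / ln (real N)) *
     (\<Sum>j<N. (real (in_degree Z j) / real (card Z)) * ln (real (in_degree Z j) / real (card Z)))"

definition min_entropy :: "nat \<Rightarrow> nat \<Rightarrow> real" where
  "min_entropy N E = Min (graph_entropy N ` digraphs N E)"

end

theory Submission imports Defs begin
lemma g_mono:
  fixes a b :: real assumes "0 < a" "a \<le> b"
  shows "a * (ln (a+1) - ln a) \<le> b * (ln (b+1) - ln b)"
proof (rule DERIV_nonneg_imp_increasing_open[of a b "\<lambda>t. t * (ln (t+1) - ln t)"])
  show "a \<le> b" by fact
  show "continuous_on {a..b} (\<lambda>t. t * (ln (t+1) - ln t))"
    using assms by (intro continuous_intros) auto
  fix x assume x: "a < x" "x < b"
  hence xp: "0 < x" using assms by auto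
  have "DERIV (\<lambda>t. t * (ln (t+1) - ln t)) x :> (1 * (ln (x+1) - ln x) + x * (1/(x+1) - 1/x))"
    using xp by (auto intro!: derivative_eq_intros)
  moreover have "1 * (ln (x+1) - ln x) + x * (1/(x+1) - 1/x) \<ge> 0"
  proof -
    have "ln (x/(x+1)) \<le> x/(x+1) - 1" using xp by (intro ln_le_minus_one) auto
    hence "ln x - ln (x+1) \<le> x/(x+1) - 1" using xp by (simp add: ln_div)
    moreover have "x * (1/(x+1) - 1/x) = x/(x+1) - 1" using xp by (simp add: right_diff_distrib)
    ultimately show ?thesis by simp
  qed
  ultimately show "\<exists>y. DERIV (\<lambda>t. t * (ln (t+1) - ln t)) x :> y \<and> 0 \<le> y" by blast
qed

lemma key:
  fixes x y :: real assumes "1 \<le> x" "x \<le> y"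
  shows "(x-1) * (ln x - ln (x-1)) \<le> (y-1) * (ln y - ln (y-1))"
proof (cases "x = 1")
  case True
  have "ln (y-1) \<le> ln y" using assms by (cases "y = 1") auto
  then show ?thesis using True assms by simp
next
  case False
  then show ?thesis using g_mono[of "x-1" "y-1"] assms by simp
qed

lemma real_step:
  fixes n d S S' :: real
  assumes "2 \<le> n" "1 \<le> d" "d \<le> n" "S \<ge> n * ln d"
    and S': "S' = S - d * ln d + (d-1) * ln (d-1)"
  shows "ln (n-1) - S'/(n-1) \<le> ln n - S/n"
proof -
  have K: "(d-1) * (ln d - ln (d-1)) \<le> (n-1) * (ln n - ln (n-1))" using key assms by simp
  have "n * S' - (n-1) * S = S - n * (d * ln d - (d-1) * ln (d-1))" unfolding S' by (simp add: algebra_simps)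
  also have "\<dots> \<ge> n * ln d - n * (d * ln d - (d-1) * ln (d-1))" using assms by simp
  moreover have "n * ln d - n * (d * ln d - (d-1) * ln (d-1)) = - n * ((d-1) * (ln d - ln (d-1)))"
    by (simp add: algebra_simps)
  moreover have "- n * ((d-1) * (ln d - ln (d-1))) \<ge> - n * ((n-1) * (ln n - ln (n-1)))"
    using K assms by simp
  ultimately have I: "n * S' - (n-1) * S \<ge> - n * ((n-1) * (ln n - ln (n-1)))" by linarith
  have np: "n > 0" "n - 1 > 0" using assms by auto
  have "(ln (n-1) - S'/(n-1)) * (n * (n-1)) = n*(n-1)*ln(n-1) - n * S'"
    using np by (simp add: field_simps)
  also have "\<dots> \<le> n*(n-1)*ln n - (n-1)*S" using I by (simp add: algebra_simps)
  also have "\<dots> = (ln n - S/n) * (n * (n-1))" using np by (simp add: field_simps)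
  finally show ?thesis using np by (simp add: mult_le_cancel_right)
qed

lemma finite_offdiag: "finite (offdiag N)"
  unfolding offdiag_def by (rule finite_subset[of _ "{..<N} \<times> {..<N}"]) auto

lemma card_offdiag: "card (offdiag N) = N * (N - 1)"
proof -
  have "offdiag N = (SIGMA i:{..<N}. {..<N} - {i})" unfolding offdiag_def by auto
  hence "card (offdiag N) = (\<Sum>i<N. card ({..<N} - {i}))" by (simp add: card_SigmaI)
  also have "\<dots> = (\<Sum>i<N. N - 1)" by (intro sum.cong) auto
  finally show ?thesis by simp
qed

lemma finite_in: "finite Z \<Longrightarrow> finite {i. (i, j) \<in> Z}"
  by (rule finite_subset[of _ "fst ` Z"]) force+

lemma sum_in_degree:
  assumes "Z \<subseteq> offdiag N"
  shows "(\<Sum>j<N. in_degree Z j) = card Z"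
proof -
  have fZ: "finite Z" using assms finite_offdiag finite_subset by blast
  have "Z = (\<Union>j\<in>{..<N}. (\<lambda>i. (i, j)) ` {i. (i, j) \<in> Z})"
    using assms unfolding offdiag_def by auto
  moreover have "card (\<Union>j\<in>{..<N}. (\<lambda>i. (i, j)) ` {i. (i, j) \<in> Z}) = (\<Sum>j<N. card ((\<lambda>i. (i, j)) ` {i. (i, j) \<in> Z}))"
    by (rule card_UN_disjoint) (auto simp: fZ finite_in)
  ultimately have "card Z = (\<Sum>j<N. card ((\<lambda>i. (i, j)) ` {i. (i, j) \<in> Z}))" by simp
  also have "\<dots> = (\<Sum>j<N. in_degree Z j)"
    unfolding in_degree_def by (intro sum.cong refl card_image) (auto simp: inj_on_def)
  finally show ?thesis by simp
qed

lemma entropy_formula: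
  assumes "Z \<subseteq> offdiag N" "card Z > 0"
  shows "graph_entropy N Z = (ln (card Z) - (\<Sum>j<N. real (in_degree Z j) * ln (in_degree Z j)) / card Z) / ln N"
proof -
  define n where "n = real (card Z)"
  have np: "n > 0" using assms n_def by simp
  have t: "(real (in_degree Z j) / n) * ln (real (in_degree Z j) / n)
      = real (in_degree Z j) * ln (in_degree Z j) / n - real (in_degree Z j) * ln n / n" for j
    using np by (cases "in_degree Z j = 0") (auto simp: ln_div field_simps)
  have "(\<Sum>j<N. (real (in_degree Z j) / n) * ln (real (in_degree Z j) / n))
      = (\<Sum>j<N. real (in_degree Z j) * ln (in_degree Z j)) / n - (\<Sum>j<N. real (in_degree Z j)) * ln n / n"
    unfolding t by (simp add: sum_subtractf sum_divide_distrib sum_distrib_right)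
  also have "(\<Sum>j<N. real (in_degree Z j)) = n"
    using sum_in_degree[OF assms(1)] n_def by (metis of_nat_sum)
  finally have E: "(\<Sum>j<N. (real (in_degree Z j) / n) * ln (real (in_degree Z j) / n))
      = (\<Sum>j<N. real (in_degree Z j) * ln (in_degree Z j)) / n - ln n" using np by simp
  show ?thesis unfolding graph_entropy_def n_def[symmetric] E by (simp add: algebra_simps diff_divide_distrib)
qed

lemma step:
  assumes N: "N \<ge> 2" and Zs: "Z \<subseteq> offdiag N" and cZ: "card Z = Suc m" and m: "m \<ge> 1"
  shows "\<exists>Z'. Z' \<subseteq> offdiag N \<and> card Z' = m \<and> graph_entropy N Z' \<le> graph_entropy N Z"
proof -
  have fZ: "finite Z" using Zs finite_offdiag finite_subset by blast
  define deg where "deg = in_degree Z"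
  define D where "D = {j \<in> {..<N}. deg j > 0}"
  have "Z \<noteq> {}" using cZ by auto
  then obtain a b where ab: "(a, b) \<in> Z" by auto
  hence "b < N" using Zs unfolding offdiag_def by auto
  moreover have "deg b > 0" unfolding deg_def in_degree_def
    using ab finite_in[OF fZ, of b] by (auto simp: card_gt_0_iff)
  ultimately have "b \<in> D" unfolding D_def by auto
  hence DD: "D \<noteq> {}" "finite D" unfolding D_def by auto
  define d where "d = Min (deg ` D)"
  have "d \<in> deg ` D" unfolding d_def using DD by auto
  then obtain j0 where j0: "j0 \<in> D" "deg j0 = d" by auto
  have dmin: "\<And>j. j \<in> D \<Longrightarrow> d \<le> deg j" unfolding d_def using DD by auto
  have j0N: "j0 < N" and dpos: "d > 0" using j0 unfolding D_def by auto
  have "{i. (i, j0) \<in> Z} \<noteq> {}" using dpos j0 unfolding deg_def in_degree_def by (auto simp: card_gt_0_iff)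
  then obtain i0 where i0: "(i0, j0) \<in> Z" by auto
  define Z' where "Z' = Z - {(i0, j0)}"
  have Z's: "Z' \<subseteq> offdiag N" using Zs unfolding Z'_def by auto
  have cZ': "card Z' = m" unfolding Z'_def using i0 fZ cZ by simp
  have deg': "in_degree Z' j = (if j = j0 then d - 1 else deg j)" for j
  proof (cases "j = j0")
    case True
    have "{i. (i, j) \<in> Z'} = {i. (i, j0) \<in> Z} - {i0}" unfolding Z'_def using True by auto
    then show ?thesis using True i0 finite_in[OF fZ, of j0] j0
      unfolding in_degree_def deg_def by simp
  next
    case False
    have "{i. (i, j) \<in> Z'} = {i. (i, j) \<in> Z}" unfolding Z'_def using False by auto
    then show ?thesis using False unfolding in_degree_def deg_def by simp
  qed
  define f where "f = (\<lambda>k::nat. real k * ln (real k))"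
  define S where "S = (\<Sum>j<N. f (deg j))"
  define S' where "S' = (\<Sum>j<N. f (in_degree Z' j))"
  have sumdeg: "(\<Sum>j<N. deg j) = Suc m" using sum_in_degree[OF Zs] cZ deg_def by simp
  have S_split: "S = f d + (\<Sum>j\<in>{..<N} - {j0}. f (deg j))"
    unfolding S_def using j0N j0(2) by (subst sum.remove[of _ j0]) auto
  have S'_split: "S' = f (d - 1) + (\<Sum>j\<in>{..<N} - {j0}. f (deg j))"
    unfolding S'_def using j0N by (subst sum.remove[of _ j0]) (auto simp: deg' intro!: sum.cong)
  have S'eq: "S' = S - real d * ln d + (real d - 1) * ln (real d - 1)"
  proof -
    have "real (d - 1) = real d - 1" using dpos by (simp add: of_nat_diff)
    then show ?thesis unfolding S_split S'_split f_def by simp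
  qed
  have dle: "d \<le> Suc m"
    using member_le_sum[of j0 "{..<N}" deg] j0N j0 sumdeg by simp
  have Sge: "S \<ge> real (Suc m) * ln d"
  proof -
    have "real (Suc m) * ln d = (\<Sum>j<N. real (deg j) * ln d)"
    proof -
      have "(\<Sum>j<N. real (deg j) * ln d) = (\<Sum>j<N. real (deg j)) * ln d" by (rule sum_distrib_right[symmetric])
      also have "(\<Sum>j<N. real (deg j)) = real (Suc m)" using sumdeg by (metis of_nat_sum)
      finally show ?thesis by simp
    qed
    also have "\<dots> \<le> S" unfolding S_def f_def
    proof (rule sum_mono)
      fix j assume j: "j \<in> {..<N}"
      show "real (deg j) * ln (real d) \<le> real (deg j) * ln (real (deg j))"
      proof (cases "deg j = 0")
        case False
        hence "j \<in> D" unfolding D_def using j by auto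
        hence "d \<le> deg j" by (rule dmin)
        then show ?thesis using dpos by (intro mult_left_mono) auto
      qed simp
    qed
    finally show ?thesis .
  qed
  have R: "ln (real (Suc m) - 1) - S'/(real (Suc m) - 1) \<le> ln (real (Suc m)) - S/real (Suc m)"
    by (rule real_step[OF _ _ _ Sge S'eq]) (use m dpos dle in auto)
  have HZ: "graph_entropy N Z = (ln (real (Suc m)) - S / real (Suc m)) / ln N"
    using entropy_formula[OF Zs] cZ unfolding S_def f_def deg_def by simp
  have HZ': "graph_entropy N Z' = (ln (real (Suc m) - 1) - S' / (real (Suc m) - 1)) / ln N"
    using entropy_formula[OF Z's] cZ' m unfolding S'_def f_def by simp
  have "ln (real N) > 0" using N by simp
  hence "graph_entropy N Z' \<le> graph_entropy N Z" unfolding HZ HZ' using R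
    by (simp add: divide_right_mono)
  thus ?thesis using Z's cZ' by blast
qed

lemma finite_digraphs: "finite (digraphs N E)"
  unfolding digraphs_def
  by (rule finite_subset[of _ "Pow (offdiag N)"]) (auto simp: finite_offdiag)

lemma mono_step:
  assumes N: "N \<ge> 2" and "1 \<le> E" and "Suc E \<le> N * (N - 1)"
  shows "min_entropy N E \<le> min_entropy N (Suc E)"
proof -
  have "Suc E \<le> card (offdiag N)" using assms(3) by (simp only: card_offdiag)
  then obtain Z where Z: "Z \<subseteq> offdiag N" "card Z = Suc E"
    by (metis obtain_subset_with_card_n)
  hence ne: "digraphs N (Suc E) \<noteq> {}" unfolding digraphs_def by auto
  have "min_entropy N (Suc E) \<in> graph_entropy N ` digraphs N (Suc E)"
    unfolding min_entropy_def using ne finite_digraphs by (intro Min_in) auto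
  then obtain W where W: "W \<in> digraphs N (Suc E)" "min_entropy N (Suc E) = graph_entropy N W" by auto
  obtain W' where W': "W' \<subseteq> offdiag N" "card W' = E" "graph_entropy N W' \<le> graph_entropy N W"
  proof -
    have "W \<subseteq> offdiag N" "card W = Suc E" using W(1) unfolding digraphs_def by auto
    from step[OF N this assms(2)] show ?thesis using that by blast
  qed
  have "min_entropy N E \<le> graph_entropy N W'"
    unfolding min_entropy_def using W' finite_digraphs by (intro Min_le) (auto simp: digraphs_def)
  thus ?thesis using W W' by simp
qed

theorem corollary1:
  fixes N E1 E2 :: nat
  assumes "N \<ge> 2" and "1 \<le> E1" and "E1 \<le> E2" and "E2 \<le> N * (N - 1)"
  shows "min_entropy N E1 \<le> min_entropy N E2"
  using assms(3,4)
proof (induction E2 rule: dec_induct)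
  case base
  then show ?case by simp
next
  case (step k)
  have "min_entropy N k \<le> min_entropy N (Suc k)"
    using mono_step[OF assms(1)] step assms(2) by simp
  with step show ?case by simp
qed
end
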